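(* Let $X$ be a compact metric space with metric $d$, let $f:X\to X$ be continuous, let $Q=\{m_i\}_{i=1}^\infty$ be a strictly increasing sequence of positive integers, and let $\delta>0$. Then the set of all distributional $\delta$-scrambled pairs in the sequence $Q$ is a $G_\delta$ subset of $X\times X$.
   Context: For $x,y\in X$, $t>0$, $n\ge1$, put $\Phi^n_{(xy,Q)}(t)=\frac1n\#\{1\le i\le n: d(f^{m_i}(x),f^{m_i}(y))\le t\}$, $\Phi_{(xy,Q)}(t)=\liminf_{n\to\infty}\Phi^n_{(xy,Q)}(t)$ and $\Phi^\star_{(xy,Q)}(t)=\limsup_{n\to\infty}\Phi^n_{(xy,Q)}(t)$. A pair $(x,y)\in X\times X$ is a distributional $\delta$-scrambled pair in the sequence $Q$ if (1) $\Phi^\star_{(xy,Q)}(t)=1$ for every $t>0$, and (2) $\Phi_{(xy,Q)}(\delta)=0$. *)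

theory Defs
  imports "HOL-Analysis.Analysis"
begin

definition distr_n :: "('a::metric_space \<Rightarrow> 'a) \<Rightarrow> (nat \<Rightarrow> nat) \<Rightarrow> 'a \<Rightarrow> 'a \<Rightarrow> nat \<Rightarrow> real \<Rightarrow> real" where
  "distr_n f m x y n t =
     real (card {i \<in> {1..n}. dist ((f ^^ m i) x) ((f ^^ m i) y) \<le> t}) / real n"

definition distr_lower :: "('a::metric_space \<Rightarrow> 'a) \<Rightarrow> (nat \<Rightarrow> nat) \<Rightarrow> 'a \<Rightarrow> 'a \<Rightarrow> real \<Rightarrow> ereal" where
  "distr_lower f m x y t = liminf (\<lambda>n. ereal (distr_n f m x y n t))"

definition distr_upper :: "('a::metric_space \<Rightarrow> 'a) \<Rightarrow> (nat \<Rightarrow> nat) \<Rightarrow> 'a \<Rightarrow> 'a \<Rightarrow> real \<Rightarrow> ereal" where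
  "distr_upper f m x y t = limsup (\<lambda>n. ereal (distr_n f m x y n t))"

definition distr_scrambled_pair ::
  "('a::metric_space \<Rightarrow> 'a) \<Rightarrow> (nat \<Rightarrow> nat) \<Rightarrow> real \<Rightarrow> 'a \<Rightarrow> 'a \<Rightarrow> bool" where
  "distr_scrambled_pair f m \<delta> x y \<longleftrightarrow>
     (\<forall>t>0. distr_upper f m x y t = 1) \<and> distr_lower f m x y \<delta> = 0"

end

theory Submission
  imports Defs
begin


lemma le_limsup_iff':
  fixes u :: "nat \<Rightarrow> ereal"
  shows "C \<le> limsup u \<longleftrightarrow> (\<forall>y<C. \<exists>\<^sub>F n in sequentially. y < u n)"
proof
  assume C: "C \<le> limsup u"
  show "\<forall>y<C. \<exists>\<^sub>F n in sequentially. y < u n"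
  proof (intro allI impI, rule ccontr)
    fix y assume y: "y < C" and nf: "\<not> (\<exists>\<^sub>F n in sequentially. y < u n)"
    then have "eventually (\<lambda>n. u n \<le> y) sequentially"
      by (simp add: not_frequently not_less)
    then have "limsup u \<le> y" by (rule Limsup_bounded)
    with C y show False by simp
  qed
next
  assume H: "\<forall>y<C. \<exists>\<^sub>F n in sequentially. y < u n"
  show "C \<le> limsup u"
  proof (rule ccontr)
    assume "\<not> C \<le> limsup u"
    then have "limsup u < C" by simp
    then obtain z where z: "limsup u < z" "z < C" using dense by blast
    have "\<forall>y>limsup u. eventually (\<lambda>n. y > u n) sequentially"
      using Limsup_le_iff[where C="limsup u" and F=sequentially and X=u] by simp
    then have ev: "eventually (\<lambda>n. u n < z) sequentially"
      using z(1) by auto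
    have fr: "\<exists>\<^sub>F n in sequentially. z < u n" using H z(2) by auto
    have "eventually (\<lambda>n. \<not> z < u n) sequentially"
      using ev by (rule eventually_mono) auto
    then show False using fr not_frequently by blast
  qed
qed

lemma liminf_le_iff':
  fixes u :: "nat \<Rightarrow> ereal"
  shows "liminf u \<le> C \<longleftrightarrow> (\<forall>y>C. \<exists>\<^sub>F n in sequentially. u n < y)"
proof
  assume C: "liminf u \<le> C"
  show "\<forall>y>C. \<exists>\<^sub>F n in sequentially. u n < y"
  proof (intro allI impI, rule ccontr)
    fix y assume y: "y > C" and nf: "\<not> (\<exists>\<^sub>F n in sequentially. u n < y)"
    then have "eventually (\<lambda>n. y \<le> u n) sequentially"
      by (simp add: not_frequently not_less)
    then have "y \<le> liminf u" by (rule Liminf_bounded)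
    with C y show False by simp
  qed
next
  assume H: "\<forall>y>C. \<exists>\<^sub>F n in sequentially. u n < y"
  show "liminf u \<le> C"
  proof (rule ccontr)
    assume "\<not> liminf u \<le> C"
    then have "C < liminf u" by simp
    then obtain z where z: "C < z" "z < liminf u" using dense by blast
    have "\<forall>y<liminf u. eventually (\<lambda>n. y < u n) sequentially"
      using le_Liminf_iff[where C="liminf u" and F=sequentially and X=u] by simp
    then have ev: "eventually (\<lambda>n. z < u n) sequentially"
      using z(2) by auto
    have fr: "\<exists>\<^sub>F n in sequentially. u n < z" using H z(1) by auto
    have "eventually (\<lambda>n. \<not> u n < z) sequentially"
      using ev by (rule eventually_mono) auto
    then show False using fr not_frequently by blast
  qed
qed

lemma limsup_eq_one_iff:
  fixes u :: "nat \<Rightarrow> real"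
  assumes "\<And>n. u n \<le> 1"
  shows "limsup (\<lambda>n. ereal (u n)) = 1 \<longleftrightarrow>
         (\<forall>k::nat. \<exists>\<^sub>F n in sequentially. 1 - 1 / real (Suc k) < u n)"
proof -
  have le: "limsup (\<lambda>n. ereal (u n)) \<le> 1"
    by (rule Limsup_bounded) (simp add: assms)
  have "limsup (\<lambda>n. ereal (u n)) = 1 \<longleftrightarrow> 1 \<le> limsup (\<lambda>n. ereal (u n))"
    using le by auto
  also have "\<dots> \<longleftrightarrow> (\<forall>y<1. \<exists>\<^sub>F n in sequentially. y < ereal (u n))"
    by (rule le_limsup_iff')
  also have "\<dots> \<longleftrightarrow> (\<forall>k::nat. \<exists>\<^sub>F n in sequentially. 1 - 1 / real (Suc k) < u n)"
  proof
    assume H: "\<forall>y<1. \<exists>\<^sub>F n in sequentially. y < ereal (u n)"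
    show "\<forall>k::nat. \<exists>\<^sub>F n in sequentially. 1 - 1 / real (Suc k) < u n"
    proof
      fix k :: nat
      have "ereal (1 - 1 / real (Suc k)) < 1" by simp
      then show "\<exists>\<^sub>F n in sequentially. 1 - 1 / real (Suc k) < u n"
        using H by fastforce
    qed
  next
    assume H: "\<forall>k::nat. \<exists>\<^sub>F n in sequentially. 1 - 1 / real (Suc k) < u n"
    show "\<forall>y<1. \<exists>\<^sub>F n in sequentially. y < ereal (u n)"
    proof (intro allI impI)
      fix y :: ereal assume y: "y < 1"
      show "\<exists>\<^sub>F n in sequentially. y < ereal (u n)"
      proof (cases y)
        case (real r)
        then have "0 < 1 - r" using y by simp
        then obtain k where k: "inverse (real (Suc k)) < 1 - r"
          using reals_Archimedean by blast
        have kk: "r < 1 - 1 / real (Suc k)" using k by (simp add: inverse_eq_divide)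
        have "\<exists>\<^sub>F n in sequentially. 1 - 1 / real (Suc k) < u n" using H by blast
        then show ?thesis
          by (rule frequently_elim1) (use kk real in simp)
      next
        case PInf then show ?thesis using y by simp
      next
        case MInf
        have "\<exists>\<^sub>F n in sequentially. True" using H[rule_format, of 0] by (rule frequently_elim1) simp
        then show ?thesis using MInf by simp
      qed
    qed
  qed
  finally show ?thesis .
qed

lemma liminf_eq_zero_iff:
  fixes u :: "nat \<Rightarrow> real"
  assumes "\<And>n. 0 \<le> u n"
  shows "liminf (\<lambda>n. ereal (u n)) = 0 \<longleftrightarrow>
         (\<forall>k::nat. \<exists>\<^sub>F n in sequentially. u n < 1 / real (Suc k))"
proof -
  have le: "0 \<le> liminf (\<lambda>n. ereal (u n))"
    by (rule Liminf_bounded) (simp add: assms)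
  have "liminf (\<lambda>n. ereal (u n)) = 0 \<longleftrightarrow> liminf (\<lambda>n. ereal (u n)) \<le> 0"
    using le by auto
  also have "\<dots> \<longleftrightarrow> (\<forall>y>0. \<exists>\<^sub>F n in sequentially. ereal (u n) < y)"
    by (rule liminf_le_iff')
  also have "\<dots> \<longleftrightarrow> (\<forall>k::nat. \<exists>\<^sub>F n in sequentially. u n < 1 / real (Suc k))"
  proof
    assume H: "\<forall>y>0. \<exists>\<^sub>F n in sequentially. ereal (u n) < y"
    show "\<forall>k::nat. \<exists>\<^sub>F n in sequentially. u n < 1 / real (Suc k)"
    proof
      fix k :: nat
      have "0 < ereal (1 / real (Suc k))" by simp
      then show "\<exists>\<^sub>F n in sequentially. u n < 1 / real (Suc k)"
        using H by fastforce
    qed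
  next
    assume H: "\<forall>k::nat. \<exists>\<^sub>F n in sequentially. u n < 1 / real (Suc k)"
    show "\<forall>y>0. \<exists>\<^sub>F n in sequentially. ereal (u n) < y"
    proof (intro allI impI)
      fix y :: ereal assume y: "0 < y"
      show "\<exists>\<^sub>F n in sequentially. ereal (u n) < y"
      proof (cases y)
        case (real r)
        then have "0 < r" using y by simp
        then obtain k where k: "inverse (real (Suc k)) < r"
          using reals_Archimedean by blast
        have kk: "1 / real (Suc k) < r" using k by (simp add: inverse_eq_divide)
        have "\<exists>\<^sub>F n in sequentially. u n < 1 / real (Suc k)" using H by blast
        then show ?thesis
          by (rule frequently_elim1) (use kk real in simp)
      next
        case PInf
        have "\<exists>\<^sub>F n in sequentially. True" using H[rule_format, of 0] by (rule frequently_elim1) simp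
        then show ?thesis using PInf by simp
      next
        case MInf then show ?thesis using y by simp
      qed
    qed
  qed
  finally show ?thesis .
qed



lemma openin_card_ge:
  assumes "finite I" "\<And>i. i \<in> I \<Longrightarrow> openin T (U i)"
  shows "openin T {p \<in> topspace T. r \<le> card {i \<in> I. p \<in> U i}}"
  using assms
proof (induction I arbitrary: r rule: finite_induct)
  case empty
  then show ?case by (cases r) auto
next
  case (insert a I)
  show ?case
  proof (cases r)
    case 0 then show ?thesis by simp
  next
    case (Suc r')
    have c: "card {i \<in> insert a I. p \<in> U i} = card {i \<in> I. p \<in> U i} + (if p \<in> U a then 1 else 0)" for p
    proof -
      have "{i \<in> insert a I. p \<in> U i} = (if p \<in> U a then insert a {i \<in> I. p \<in> U i} else {i \<in> I. p \<in> U i})"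
        by auto
      then show ?thesis using insert.hyps by auto
    qed
    have eq: "{p \<in> topspace T. r \<le> card {i \<in> insert a I. p \<in> U i}} =
       {p \<in> topspace T. r \<le> card {i \<in> I. p \<in> U i}} \<union> (U a \<inter> {p \<in> topspace T. r' \<le> card {i \<in> I. p \<in> U i}})"
      unfolding c using Suc by auto
    show ?thesis unfolding eq
      using insert.IH insert.prems by (intro openin_Un openin_Int) auto
  qed
qed

lemma continuous_on_funpow:
  assumes "continuous_on X f" "f ` X \<subseteq> X"
  shows "continuous_on X (f ^^ k) \<and> (f ^^ k) ` X \<subseteq> X"
proof (induction k)
  case 0 then show ?case by (simp add: continuous_on_id)
next
  case (Suc k)
  then show ?case using assms
    by (auto simp: image_subset_iff intro: continuous_on_compose2[of X f X "f ^^ k"])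
qed

lemma openin_dist_lt:
  fixes f :: "'a::metric_space \<Rightarrow> 'a"
  assumes "continuous_on X f" "f ` X \<subseteq> X"
  shows "openin (top_of_set (X \<times> X)) {p \<in> X \<times> X. dist ((f ^^ k) (fst p)) ((f ^^ k) (snd p)) < t}"
    and "openin (top_of_set (X \<times> X)) {p \<in> X \<times> X. dist ((f ^^ k) (fst p)) ((f ^^ k) (snd p)) > t}"
proof -
  have fk: "continuous_on X (f ^^ k)" using continuous_on_funpow[OF assms] by blast
  have c: "continuous_on (X \<times> X) (\<lambda>p. dist ((f ^^ k) (fst p)) ((f ^^ k) (snd p)))"
    by (intro continuous_on_dist continuous_on_compose2[OF fk] continuous_on_fst continuous_on_snd continuous_on_id) auto
  have "openin (top_of_set (X \<times> X)) ((X \<times> X) \<inter> (\<lambda>p. dist ((f ^^ k) (fst p)) ((f ^^ k) (snd p))) -` {..<t})"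
    by (rule continuous_openin_preimage_gen[OF c]) simp
  moreover have "(X \<times> X) \<inter> (\<lambda>p. dist ((f ^^ k) (fst p)) ((f ^^ k) (snd p))) -` {..<t} = {p \<in> X \<times> X. dist ((f ^^ k) (fst p)) ((f ^^ k) (snd p)) < t}"
    by auto
  ultimately show "openin (top_of_set (X \<times> X)) {p \<in> X \<times> X. dist ((f ^^ k) (fst p)) ((f ^^ k) (snd p)) < t}" by simp
  have "openin (top_of_set (X \<times> X)) ((X \<times> X) \<inter> (\<lambda>p. dist ((f ^^ k) (fst p)) ((f ^^ k) (snd p))) -` {t<..})"
    by (rule continuous_openin_preimage_gen[OF c]) simp
  moreover have "(X \<times> X) \<inter> (\<lambda>p. dist ((f ^^ k) (fst p)) ((f ^^ k) (snd p))) -` {t<..} = {p \<in> X \<times> X. dist ((f ^^ k) (fst p)) ((f ^^ k) (snd p)) > t}"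
    by auto
  ultimately show "openin (top_of_set (X \<times> X)) {p \<in> X \<times> X. dist ((f ^^ k) (fst p)) ((f ^^ k) (snd p)) > t}" by simp
qed

lemma topo_eq: "prod_topology (top_of_set X) (top_of_set Y) = top_of_set (X \<times> Y)"
  by (simp add: subtopology_Times[symmetric])



lemma freq_pos: "(\<exists>\<^sub>F n in sequentially. P n) \<longleftrightarrow> (\<forall>N. \<exists>n. N \<le> n \<and> 1 \<le> n \<and> P n)"
proof -
  have "(\<forall>N. \<exists>n\<ge>N. P n) \<longleftrightarrow> (\<forall>N. \<exists>n. N \<le> n \<and> 1 \<le> n \<and> P n)"
  proof
    assume H: "\<forall>N. \<exists>n\<ge>N. P n"
    show "\<forall>N. \<exists>n. N \<le> n \<and> 1 \<le> n \<and> P n"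
    proof
      fix N :: nat
      obtain n where "n \<ge> max N 1" "P n" using H by blast
      then show "\<exists>n. N \<le> n \<and> 1 \<le> n \<and> P n" by auto
    qed
  qed auto
  then show ?thesis by (simp add: frequently_sequentially)
qed

lemma ex_nat_le_iff: "(\<exists>r::nat. c * real n < real r \<and> r \<le> K) \<longleftrightarrow> c * real n < real K"
proof
  assume "\<exists>r::nat. c * real n < real r \<and> r \<le> K"
  then obtain r where "c * real n < real r" "r \<le> K" by blast
  then show "c * real n < real K" by linarith
qed auto

lemma card_split: "card {i \<in> A. P i} + card {i \<in> A. \<not> P i} = card A" if "finite A"
proof -
  have "A = {i \<in> A. P i} \<union> {i \<in> A. \<not> P i}" by auto
  then have "card A = card ({i \<in> A. P i} \<union> {i \<in> A. \<not> P i})" by simp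
  also have "\<dots> = card {i \<in> A. P i} + card {i \<in> A. \<not> P i}"
    using that by (intro card_Un_disjoint) auto
  finally show ?thesis by simp
qed

theorem proposition2p3:
  fixes X :: "'a::metric_space set" and f :: "'a \<Rightarrow> 'a" and m :: "nat \<Rightarrow> nat" and \<delta> :: real
  assumes "compact X"
    and "continuous_on X f" and "f ` X \<subseteq> X"
    and "strict_mono_on {1..} m" and "\<forall>i\<ge>1. 0 < m i"
    and "\<delta> > 0"
  shows "gdelta_in (prod_topology (top_of_set X) (top_of_set X))
           {(x, y) \<in> X \<times> X. distr_scrambled_pair f m \<delta> x y}"
proof -
  define S where "S = X \<times> X"
  define dd where "dd k p = dist ((f ^^ k) (fst p)) ((f ^^ k) (snd p))" for k p
  define W where "W t i = {p \<in> S. dd (m i) p < t}" for t i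
  define Z where "Z i = {p \<in> S. dd (m i) p > \<delta>}" for i
  define c where "c k = 1 - 1 / real (Suc k)" for k
  define A where "A j k N = (\<Union>n\<in>{n. N \<le> n \<and> 1 \<le> n}.
      {p \<in> S. \<exists>r::nat. c k * real n < real r \<and> r \<le> card {i \<in> {1..n}. p \<in> W (1 / real (Suc j)) i}})" for j k N
  define B where "B k N = (\<Union>n\<in>{n. N \<le> n \<and> 1 \<le> n}.
      {p \<in> S. \<exists>r::nat. c k * real n < real r \<and> r \<le> card {i \<in> {1..n}. p \<in> Z i}})" for k N
  let ?T = "top_of_set S"
  have topS: "topspace ?T = S" by simp
  have Wo: "openin ?T (W t i)" for t i
    using openin_dist_lt(1)[OF assms(2,3), where k="m i" and t=t] unfolding W_def dd_def S_def by simp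
  have Zo: "openin ?T (Z i)" for i
    using openin_dist_lt(2)[OF assms(2,3), where k="m i" and t=\<delta>] unfolding Z_def dd_def S_def by simp
  have cnt_open: "openin ?T {p \<in> S. \<exists>r::nat. a < real r \<and> r \<le> card {i \<in> {1..n}. p \<in> U i}}"
    if "\<And>i. openin ?T (U i)" for a and n :: nat and U
  proof -
    have oc: "openin ?T {p \<in> S. r \<le> card {i \<in> {1..n}. p \<in> U i}}" for r
      using openin_card_ge[of "{1..n}" ?T U r] that by simp
    have "{p \<in> S. \<exists>r::nat. a < real r \<and> r \<le> card {i \<in> {1..n}. p \<in> U i}} =
          (\<Union>r\<in>{r::nat. a < real r}. {p \<in> S. r \<le> card {i \<in> {1..n}. p \<in> U i}})"
      by auto
    moreover have "openin ?T (\<Union>r\<in>{r::nat. a < real r}. {p \<in> S. r \<le> card {i \<in> {1..n}. p \<in> U i}})"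
      using oc by (intro openin_Union) blast
    ultimately show ?thesis by simp
  qed
  have Ao: "openin ?T (A j k N)" for j k N
    unfolding A_def using cnt_open[where U="W (1 / real (Suc j))", OF Wo] by (intro openin_Union) blast
  have Bo: "openin ?T (B k N)" for k N
    unfolding B_def using cnt_open[where U=Z, OF Zo] by (intro openin_Union) blast
  have key: "distr_scrambled_pair f m \<delta> x y \<longleftrightarrow> (\<forall>j k N. (x, y) \<in> A j k N) \<and> (\<forall>k N. (x, y) \<in> B k N)"
    if p: "(x, y) \<in> S" for x y
  proof -
    define Phi where "Phi n t = distr_n f m x y n t" for n t
    define Psi where "Psi n t = real (card {i \<in> {1..n}. dd (m i) (x, y) < t}) / real n" for n t
    have Phi_eq: "Phi n t = real (card {i \<in> {1..n}. dd (m i) (x, y) \<le> t}) / real n" for n t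
      unfolding Phi_def distr_n_def dd_def by simp
    have Phi_le1: "Phi n t \<le> 1" for n t
    proof -
      have "card {i \<in> {1..n}. dd (m i) (x, y) \<le> t} \<le> card {1..n}"
        by (intro card_mono) auto
      then show ?thesis unfolding Phi_eq by (cases "n = 0") (auto simp: divide_le_eq)
    qed
    have Phi_ge0: "0 \<le> Phi n t" for n t unfolding Phi_eq by simp
    have PhiPsi: "Phi n t \<le> Psi n t'" if "t < t'" for n t t'
    proof -
      have "card {i \<in> {1..n}. dd (m i) (x, y) \<le> t} \<le> card {i \<in> {1..n}. dd (m i) (x, y) < t'}"
        using that by (intro card_mono) auto
      then show ?thesis unfolding Phi_eq Psi_def by (intro divide_right_mono) auto
    qed
    have PsiPhi: "Psi n t' \<le> Phi n t" if "t' \<le> t" for n t t'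
    proof -
      have "card {i \<in> {1..n}. dd (m i) (x, y) < t'} \<le> card {i \<in> {1..n}. dd (m i) (x, y) \<le> t}"
        using that by (intro card_mono) auto
      then show ?thesis unfolding Phi_eq Psi_def by (intro divide_right_mono) auto
    qed
    have Amem: "(x, y) \<in> A j k N \<longleftrightarrow> (\<exists>n. N \<le> n \<and> 1 \<le> n \<and> c k < Psi n (1 / real (Suc j)))" for j k N
    proof -
      have cW: "{i \<in> {1..n}. (x, y) \<in> W t i} = {i \<in> {1..n}. dd (m i) (x, y) < t}" for n t
        using p unfolding W_def by auto
      have cd: "c k * real n < real K \<longleftrightarrow> c k < real K / real n" if "1 \<le> n" for n K
        using that by (simp add: pos_less_divide_eq)
      have e1: "(x, y) \<in> A j k N \<longleftrightarrow> (\<exists>n. N \<le> n \<and> 1 \<le> n \<and> c k * real n < real (card {i \<in> {1..n}. dd (m i) (x, y) < 1 / real (Suc j)}))"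
        unfolding A_def ex_nat_le_iff using p by (simp add: W_def)
      show ?thesis
        unfolding e1 Psi_def
      proof (intro iffI; elim exE conjE)
        fix n assume h: "N \<le> n" "1 \<le> n" "c k * real n < real (card {i \<in> {1..n}. dd (m i) (x, y) < 1 / real (Suc j)})"
        show "\<exists>n. N \<le> n \<and> 1 \<le> n \<and> c k < real (card {i \<in> {1..n}. dd (m i) (x, y) < 1 / real (Suc j)}) / real n"
          using h(1,2) iffD1[OF cd[OF h(2)] h(3)] by blast
      next
        fix n assume h: "N \<le> n" "1 \<le> n" "c k < real (card {i \<in> {1..n}. dd (m i) (x, y) < 1 / real (Suc j)}) / real n"
        show "\<exists>n. N \<le> n \<and> 1 \<le> n \<and> c k * real n < real (card {i \<in> {1..n}. dd (m i) (x, y) < 1 / real (Suc j)})"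
          using h(1,2) iffD2[OF cd[OF h(2)] h(3)] by blast
      qed
    qed
    have Bmem: "(x, y) \<in> B k N \<longleftrightarrow> (\<exists>n. N \<le> n \<and> 1 \<le> n \<and> Phi n \<delta> < 1 / real (Suc k))" for k N
    proof -
      have cz: "{i \<in> {1..n}. (x, y) \<in> Z i} = {i \<in> {1..n}. \<not> dd (m i) (x, y) \<le> \<delta>}" for n
        using p unfolding Z_def by auto
      have sp: "real (card {i \<in> {1..n}. dd (m i) (x, y) \<le> \<delta>}) + real (card {i \<in> {1..n}. \<not> dd (m i) (x, y) \<le> \<delta>}) = real n" for n
        using card_split[of "{1..n}" "\<lambda>i. dd (m i) (x, y) \<le> \<delta>"] by simp
      have eq: "c k * real n < real (card {i \<in> {1..n}. \<not> dd (m i) (x, y) \<le> \<delta>}) \<longleftrightarrow> Phi n \<delta> < 1 / real (Suc k)"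
        if "1 \<le> n" for n
      proof -
        have "Phi n \<delta> < 1 / real (Suc k) \<longleftrightarrow> real (card {i \<in> {1..n}. dd (m i) (x, y) \<le> \<delta>}) < 1 / real (Suc k) * real n"
          unfolding Phi_eq using that by (simp add: pos_divide_less_eq)
        moreover have "c k * real n = real n - 1 / real (Suc k) * real n"
          unfolding c_def by (simp add: left_diff_distrib)
        ultimately show ?thesis using sp[of n] by (smt (verit))
      qed
      have e1: "(x, y) \<in> B k N \<longleftrightarrow> (\<exists>n. N \<le> n \<and> 1 \<le> n \<and> c k * real n < real (card {i \<in> {1..n}. \<not> dd (m i) (x, y) \<le> \<delta>}))"
        unfolding B_def ex_nat_le_iff using p by (simp add: Z_def not_le)
      show ?thesis
        unfolding e1
      proof (intro iffI; elim exE conjE)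
        fix n assume h: "N \<le> n" "1 \<le> n" "c k * real n < real (card {i \<in> {1..n}. \<not> dd (m i) (x, y) \<le> \<delta>})"
        show "\<exists>n. N \<le> n \<and> 1 \<le> n \<and> Phi n \<delta> < 1 / real (Suc k)"
          using h(1,2) iffD1[OF eq[OF h(2)] h(3)] by blast
      next
        fix n assume h: "N \<le> n" "1 \<le> n" "Phi n \<delta> < 1 / real (Suc k)"
        show "\<exists>n. N \<le> n \<and> 1 \<le> n \<and> c k * real n < real (card {i \<in> {1..n}. \<not> dd (m i) (x, y) \<le> \<delta>})"
          using h(1,2) iffD2[OF eq[OF h(2)] h(3)] by blast
      qed
    qed
    have P1: "(\<forall>t>0. distr_upper f m x y t = 1) \<longleftrightarrow> (\<forall>j k N. (x, y) \<in> A j k N)"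
    proof -
      have "(\<forall>t>0. distr_upper f m x y t = 1) \<longleftrightarrow> (\<forall>t>0. \<forall>k. \<exists>\<^sub>F n in sequentially. c k < Phi n t)"
        unfolding distr_upper_def Phi_def[symmetric] c_def
        using limsup_eq_one_iff[OF Phi_le1] by simp
      also have "\<dots> \<longleftrightarrow> (\<forall>j k N. (x, y) \<in> A j k N)"
      proof
        assume H: "\<forall>t>0. \<forall>k. \<exists>\<^sub>F n in sequentially. c k < Phi n t"
        show "\<forall>j k N. (x, y) \<in> A j k N"
        proof (intro allI)
          fix j k N
          have "\<exists>\<^sub>F n in sequentially. c k < Phi n (1 / real (Suc (Suc j)))"
            using H by simp
          then obtain n where n: "N \<le> n" "1 \<le> n" "c k < Phi n (1 / real (Suc (Suc j)))"
            unfolding freq_pos by blast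
          have "1 / real (Suc (Suc j)) < 1 / real (Suc j)" by (simp add: frac_less2)
          then have "c k < Psi n (1 / real (Suc j))" using PhiPsi n(3) by (meson less_le_trans)
          then show "(x, y) \<in> A j k N" using Amem n by blast
        qed
      next
        assume H: "\<forall>j k N. (x, y) \<in> A j k N"
        show "\<forall>t>0. \<forall>k. \<exists>\<^sub>F n in sequentially. c k < Phi n t"
        proof (intro allI impI)
          fix t :: real and k assume t: "0 < t"
          then obtain j where j: "inverse (real (Suc j)) < t" using reals_Archimedean by blast
          then have j': "1 / real (Suc j) \<le> t" by (simp add: inverse_eq_divide)
          show "\<exists>\<^sub>F n in sequentially. c k < Phi n t"
            unfolding freq_pos
          proof
            fix N
            obtain n where n: "N \<le> n" "1 \<le> n" "c k < Psi n (1 / real (Suc j))"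
              using H Amem by blast
            then show "\<exists>n. N \<le> n \<and> 1 \<le> n \<and> c k < Phi n t"
              using PsiPhi[OF j', of n] by (meson less_le_trans)
          qed
        qed
      qed
      finally show ?thesis .
    qed
    have P2: "distr_lower f m x y \<delta> = 0 \<longleftrightarrow> (\<forall>k N. (x, y) \<in> B k N)"
    proof -
      have "distr_lower f m x y \<delta> = 0 \<longleftrightarrow> (\<forall>k. \<exists>\<^sub>F n in sequentially. Phi n \<delta> < 1 / real (Suc k))"
        unfolding distr_lower_def Phi_def[symmetric]
        using liminf_eq_zero_iff[OF Phi_ge0] by simp
      then show ?thesis unfolding freq_pos using Bmem by blast
    qed
    show ?thesis unfolding distr_scrambled_pair_def using P1 P2 by blast
  qed
  define F where "F = range (\<lambda>(j, k, N). A j k N) \<union> range (\<lambda>(k, N). B k N)"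
  have AS: "A j k N \<subseteq> S" for j k N unfolding A_def by auto
  have seteq: "{(x, y) \<in> X \<times> X. distr_scrambled_pair f m \<delta> x y} = \<Inter> F"
  proof (rule set_eqI)
    fix p :: "'a \<times> 'a"
    obtain x y where pxy: "p = (x, y)" by fastforce
    have "p \<in> \<Inter> F \<longleftrightarrow> (\<forall>j k N. p \<in> A j k N) \<and> (\<forall>k N. p \<in> B k N)"
      unfolding F_def by auto
    moreover have "p \<in> \<Inter> F \<Longrightarrow> p \<in> S" using AS unfolding F_def by blast
    ultimately show "p \<in> {(x, y) \<in> X \<times> X. distr_scrambled_pair f m \<delta> x y} \<longleftrightarrow> p \<in> \<Inter> F"
      using key unfolding pxy S_def by auto
  qed
  have "gdelta_in ?T (\<Inter> F)"
  proof (rule gdelta_in_Inter)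
    show "countable F" unfolding F_def by simp
    show "F \<noteq> {}" unfolding F_def by simp
    show "gdelta_in ?T U" if "U \<in> F" for U
      using that Ao Bo unfolding F_def by (auto intro: open_imp_gdelta_in)
  qed
  then show ?thesis
    unfolding seteq topo_eq S_def .
qed

end
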